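(* Let $A$ be a real $m\times m$ matrix, $f$ in the range of $A$, $y$ the minimal-norm solution of $Ay=f$ (so $y\perp\mathcal{N}(A)$). Fix $q\in(0,1)$, $C>1$, $\varepsilon\in(0,1)$. For each $\delta\in(0,1)$ let $f_\delta\in\mathbb{R}^m$ satisfy $\|f_\delta-f\|\le\delta$ and $\|f_\delta\|>C\delta^\varepsilon$. Define $u_1^\delta=0$, $u_{n+1}^\delta=q^nT_{q^n}^{-1}u_n^\delta+T_{q^n}^{-1}A^*f_\delta$ for $n\ge1$, and let $n_\delta$ be the smallest integer $n\ge1$ with $\|AT_{q^{n}}^{-1}A^*f_\delta-f_\delta\|\le C\delta^\varepsilon$. Then $$\lim_{\delta\to0}\|u_{n_\delta}^\delta-y\|=0.$$
   Context: $A^*$ is the transpose of $A$, $T:=A^*A$, $T_a:=T+aI$ for $a>0$; $\mathcal{N}(A)=\{u:Au=0\}$; $\|\cdot\|$ is the Euclidean norm. *)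

theory Defs
  imports "HOL-Analysis.Analysis"
begin

definition Tmat :: "real^'m^'m \<Rightarrow> real \<Rightarrow> real^'m^'m" where
  "Tmat A a = transpose A ** A + a *\<^sub>R mat 1"

definition min_norm_solution :: "real^'m^'m \<Rightarrow> real^'m \<Rightarrow> real^'m \<Rightarrow> bool" where
  "min_norm_solution A f y \<longleftrightarrow> A *v y = f \<and> (\<forall>z. A *v z = f \<longrightarrow> norm y \<le> norm z)"

text \<open>Iterates u_n (n \<ge> 1): u_1 = 0,
  u_(n+1) = q^n T_(q^n)^-1 u_n + T_(q^n)^-1 A^* g.  The value at index 0 is a dummy.\<close>
fun useq :: "real^'m^'m \<Rightarrow> real \<Rightarrow> real^'m \<Rightarrow> nat \<Rightarrow> real^'m" where
  "useq A q g 0 = 0"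
| "useq A q g (Suc 0) = 0"
| "useq A q g (Suc (Suc k)) =
     (q ^ Suc k) *\<^sub>R (matrix_inv (Tmat A (q ^ Suc k)) *v useq A q g (Suc k))
     + matrix_inv (Tmat A (q ^ Suc k)) *v (transpose A *v g)"

definition stop_index :: "real^'m^'m \<Rightarrow> real \<Rightarrow> real \<Rightarrow> real \<Rightarrow> real \<Rightarrow> real^'m \<Rightarrow> nat" where
  "stop_index A q C eps \<delta> g = (LEAST n. n \<ge> 1 \<and>
      norm (A *v (matrix_inv (Tmat A (q ^ n)) *v (transpose A *v g)) - g) \<le> C * \<delta> powr eps)"

end

theory Submission
  imports Defs
begin

lemma inner_transpose: "(transpose A *v x) \<bullet> (y::real^'n) = x \<bullet> (A *v y)"
  by (simp add: dot_lmul_matrix)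

lemma T_apply: "Tmat A a *v z = transpose A *v (A *v z) + a *\<^sub>R (z::real^'m)"
proof -
  have "Tmat A a *v z = (transpose A ** A) *v z + (a *\<^sub>R mat 1) *v z"
    unfolding Tmat_def by (rule matrix_vector_mult_add_rdistrib)
  also have "(transpose A ** A) *v z = transpose A *v (A *v z)" by (rule matrix_vector_mul_assoc[symmetric])
  also have "(a *\<^sub>R mat 1) *v z = a *\<^sub>R (mat 1 *v z)" by (rule scaleR_matrix_vector_assoc[symmetric])
  also have "mat 1 *v z = z" by (rule matrix_vector_mul_lid)
  finally show ?thesis .
qed
lemma T_inner: "z \<bullet> (Tmat A a *v z) = (norm (A *v z))\<^sup>2 + a * (norm (z::real^'m))\<^sup>2"
proof -
  have "z \<bullet> (Tmat A a *v z) = z \<bullet> (transpose A *v (A *v z)) + a * (z \<bullet> z)"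
    unfolding T_apply by (simp only: inner_add_right inner_scaleR_right)
  also have "z \<bullet> (transpose A *v (A *v z)) = (A *v z) \<bullet> (A *v z)"
    by (metis inner_commute inner_transpose)
  finally show ?thesis by (simp only: power2_norm_eq_inner)
qed
lemma T_inj: assumes "a > 0" shows "inj ((*v) (Tmat A a))"
proof -
  have "z = 0" if "Tmat A a *v z = 0" for z
  proof -
    have "(norm (A *v z))\<^sup>2 + a * (norm z)\<^sup>2 = 0" using T_inner[of z A a] that by simp
    moreover have "a * (norm z)\<^sup>2 \<ge> 0" using assms by simp
    moreover have "(norm (A *v z))\<^sup>2 \<ge> 0" by simp
    ultimately have "a * (norm z)\<^sup>2 = 0" by linarith
    thus ?thesis using assms by simp
  qed
  note * = this
  show ?thesis
  proof (rule injI)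
    fix x y assume "Tmat A a *v x = Tmat A a *v y"
    hence "Tmat A a *v (x - y) = 0" by (simp add: matrix_vector_mult_diff_distrib)
    thus "x = y" using *[of "x - y"] by simp
  qed
qed

lemma T_invertible: assumes "a > 0" shows "invertible (Tmat A a)"
proof -
  obtain B where "B ** Tmat A a = mat 1" using T_inj[OF assms] matrix_left_invertible_injective by blast
  moreover from this have "Tmat A a ** B = mat 1" using matrix_left_right_inverse[of B "Tmat A a"] by simp
  ultimately show ?thesis unfolding invertible_def by blast
qed

lemma inv_props: assumes "invertible M" shows "M ** matrix_inv M = mat 1" "matrix_inv M ** M = mat 1"
proof -
  have "\<exists>M'. M ** M' = mat 1 \<and> M' ** M = mat 1" using assms invertible_def by blast
  hence "M ** matrix_inv M = mat 1 \<and> matrix_inv M ** M = mat 1"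
    unfolding matrix_inv_def by (rule someI_ex)
  thus "M ** matrix_inv M = mat 1" "matrix_inv M ** M = mat 1" by auto
qed

lemma T_inv1: assumes "a > 0" shows "Tmat A a *v (matrix_inv (Tmat A a) *v x) = (x::real^'m)"
  by (simp add: matrix_vector_mul_assoc inv_props[OF T_invertible[OF assms]])
lemma T_inv2: assumes "a > 0" shows "matrix_inv (Tmat A a) *v (Tmat A a *v x) = (x::real^'m)"
  by (simp add: matrix_vector_mul_assoc inv_props[OF T_invertible[OF assms]])

lemma T_solve: assumes "a > 0" "Tmat A a *v z = x" shows "matrix_inv (Tmat A a) *v x = (z::real^'m)"
  using T_inv2[OF assms(1)] assms(2) by metis

lemma amgm: "(x::real) * y \<le> x\<^sup>2 + y\<^sup>2 / 4"
proof - have "0 \<le> (x - y/2)\<^sup>2" by simp thus ?thesis by (simp add: power2_eq_square algebra_simps) qed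

lemma norm_expand: "(norm (u + c *\<^sub>R z))\<^sup>2 = (norm u)\<^sup>2 + 2*c*(u \<bullet> z) + c\<^sup>2*(norm (z::'a::real_inner))\<^sup>2"
  unfolding power2_norm_eq_inner inner_add_left inner_add_right inner_scaleR_left inner_scaleR_right inner_commute[of z u]
  by (simp add: power2_eq_square distrib_left)

lemma Bz_lemma: "(transpose A *v (A *v z)) \<bullet> z = (norm (A *v (z::real^'m)))\<^sup>2"
  unfolding power2_norm_eq_inner by (rule inner_transpose)

lemma E1: assumes "a > 0" "Tmat A a *v z = x" shows "a * norm z \<le> norm (x::real^'m)"
proof -
  let ?B = "transpose A *v (A *v z)"
  have x: "x = ?B + a *\<^sub>R z" using assms(2) T_apply by metis
  have "(norm x)\<^sup>2 = (norm ?B)\<^sup>2 + 2 * a * (?B \<bullet> z) + a\<^sup>2 * (norm z)\<^sup>2"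
    unfolding x by (rule norm_expand)
  moreover have "(a * norm z)\<^sup>2 = a\<^sup>2 * (norm z)\<^sup>2" by (rule power_mult_distrib)
  moreover have "0 \<le> 2 * a * (?B \<bullet> z)" unfolding Bz_lemma using assms(1) by simp
  moreover have "0 \<le> (norm ?B)\<^sup>2" by (rule zero_le_power2)
  ultimately have "(a * norm z)\<^sup>2 \<le> (norm x)\<^sup>2" by linarith
  thus ?thesis by (rule power2_le_imp_le[OF _ norm_ge_zero])
qed

lemma E2: assumes "a > 0" "Tmat A a *v z = transpose A *v v" shows "a * (norm z)\<^sup>2 \<le> (norm (v::real^'m))\<^sup>2 / 4"
proof -
  have "(norm (A *v z))\<^sup>2 + a * (norm z)\<^sup>2 = z \<bullet> (transpose A *v v)" using T_inner[of z A a] assms(2) by metis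
  also have "\<dots> = (A *v z) \<bullet> v" by (metis inner_commute inner_transpose)
  also have "\<dots> \<le> norm (A *v z) * norm v" by (rule norm_cauchy_schwarz)
  also have "\<dots> \<le> (norm (A *v z))\<^sup>2 + (norm v)\<^sup>2 / 4" by (rule amgm)
  finally show ?thesis by linarith
qed

lemma E6: assumes "a > 0" "Tmat A a *v z = w" shows "a * (norm (A *v z))\<^sup>2 \<le> (norm (w::real^'m))\<^sup>2 / 4"
proof -
  let ?B = "transpose A *v (A *v z)"
  have w: "w = ?B + a *\<^sub>R z" using assms(2) T_apply by metis
  have "?B \<bullet> w = ?B \<bullet> ?B + a * (?B \<bullet> z)"
    unfolding w by (simp only: inner_add_right inner_scaleR_right)
  hence "(norm ?B)\<^sup>2 + a * (norm (A *v z))\<^sup>2 = ?B \<bullet> w"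
    unfolding Bz_lemma power2_norm_eq_inner[of ?B] by simp
  also have "\<dots> \<le> norm ?B * norm w" by (rule norm_cauchy_schwarz)
  also have "\<dots> \<le> (norm ?B)\<^sup>2 + (norm w)\<^sup>2 / 4" by (rule amgm)
  finally show ?thesis by linarith
qed

lemma E5: assumes "a > 0" "Tmat A a *v z = transpose A *v d" shows "norm (A *v z - d) \<le> norm (d::real^'m)"
proof -
  let ?r = "d - A *v z"
  have "transpose A *v ?r = transpose A *v d - transpose A *v (A *v z)"
    by (rule matrix_vector_mult_diff_distrib)
  also have "\<dots> = a *\<^sub>R z" using assms(2) T_apply[of A a z] by (metis add_diff_cancel_left')
  finally have rt: "transpose A *v ?r = a *\<^sub>R z" .
  have "?r \<bullet> (A *v z) = (transpose A *v ?r) \<bullet> z" by (rule inner_transpose[symmetric])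
  also have "\<dots> = a * (norm z)\<^sup>2" unfolding rt power2_norm_eq_inner by (rule inner_scaleR_left)
  finally have ra: "?r \<bullet> (A *v z) = a * (norm z)\<^sup>2" .
  have d: "d = ?r + 1 *\<^sub>R (A *v z)" by simp
  have "(norm d)\<^sup>2 = (norm ?r)\<^sup>2 + 2 * 1 * (?r \<bullet> (A *v z)) + 1\<^sup>2 * (norm (A *v z))\<^sup>2"
    by (subst d, rule norm_expand)
  moreover have "0 \<le> a * (norm z)\<^sup>2" using assms(1) by simp
  moreover have "0 \<le> (norm (A *v z))\<^sup>2" by (rule zero_le_power2)
  ultimately have "(norm ?r)\<^sup>2 \<le> (norm d)\<^sup>2" using ra by simp
  hence "norm ?r \<le> norm d" by (rule power2_le_imp_le[OF _ norm_ge_zero])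
  thus ?thesis by (simp add: norm_minus_commute)
qed

lemma mv_neg: "M *v (- x) = - (M *v (x::real^'n))"
  using matrix_vector_mult_diff_distrib[of M 0 x] by simp

lemma useq_add: "useq A q (g + h) n = useq A q g n + useq A q h n"
  by (induction A q g n rule: useq.induct)
     (simp_all add: algebra_simps matrix_vector_right_distrib del: transpose_matrix_vector)

lemma useq_scale: "useq A q (c *\<^sub>R g) n = c *\<^sub>R useq A q g n"
  by (induction A q g n rule: useq.induct)
     (simp_all add: algebra_simps del: transpose_matrix_vector)

lemma useq_linear: "linear (\<lambda>h. useq A q h n)"
  by (rule linearI) (simp_all add: useq_add useq_scale)

lemma useq_diff: "useq A q (g - h) n = useq A q g n - useq A q h n"
  using linear_diff[OF useq_linear] by blast

lemma U_err:
  assumes "0 < q" "transpose A *v h = transpose A *v (A *v w)"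
  shows "useq A q h (Suc (Suc k)) - w
     = q^Suc k *\<^sub>R (matrix_inv (Tmat A (q^Suc k)) *v (useq A q h (Suc k) - w))"
proof -
  let ?a = "q^Suc k" let ?M = "matrix_inv (Tmat A ?a)"
  have a: "?a > 0" using assms(1) by simp
  have "?M *v (Tmat A ?a *v w) = w" by (rule T_inv2[OF a])
  hence "?M *v (transpose A *v (A *v w) + ?a *\<^sub>R w) = w" by (simp only: T_apply)
  hence *: "?M *v (transpose A *v (A *v w)) = w - ?a *\<^sub>R (?M *v w)"
    by (simp add: matrix_vector_right_distrib matrix_vector_mult_scaleR algebra_simps del: transpose_matrix_vector)
  have u: "useq A q h (Suc (Suc k)) = ?a *\<^sub>R (?M *v useq A q h (Suc k)) + ?M *v (transpose A *v (A *v w))"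
    using assms(2) by (simp only: useq.simps)
  show ?thesis unfolding u *
    by (simp add: matrix_vector_mult_diff_distrib scaleR_diff_right del: transpose_matrix_vector)
qed


lemma U_bound:
  assumes "0 < q" "transpose A *v h = transpose A *v (A *v w)"
  shows "norm (useq A q h n - w) \<le> norm w"
proof -
  have "norm (useq A q h (Suc k) - w) \<le> norm w" for k
  proof (induction k)
    case 0 then show ?case by simp
  next
    case (Suc k)
    let ?a = "q^Suc k" let ?M = "matrix_inv (Tmat A ?a)"
    let ?x = "useq A q h (Suc k) - w"
    have a: "?a > 0" using assms(1) by simp
    have "?a * norm (?M *v ?x) \<le> norm ?x" by (rule E1[OF a T_inv1[OF a]])
    also have "\<dots> \<le> norm w" by (rule Suc.IH)
    finally show ?case unfolding U_err[OF assms] using a by simp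
  qed
  thus ?thesis by (cases n) auto
qed

lemma E3: assumes "a > 0"
  shows "matrix_inv (Tmat A a) *v (transpose A *v v) = transpose A *v (matrix_inv (Tmat (transpose A) a) *v v)"
proof (rule T_solve[OF assms])
  let ?w = "matrix_inv (Tmat (transpose A) a) *v v"
  have "Tmat (transpose A) a *v ?w = v" by (rule T_inv1[OF assms])
  hence "A *v (transpose A *v ?w) + a *\<^sub>R ?w = v" by (simp add: T_apply del: transpose_matrix_vector)
  hence "transpose A *v (A *v (transpose A *v ?w) + a *\<^sub>R ?w) = transpose A *v v" by simp
  thus "Tmat A a *v (transpose A *v ?w) = transpose A *v v"
    by (simp add: T_apply matrix_vector_right_distrib matrix_vector_mult_scaleR del: transpose_matrix_vector)
qed

lemma U_conv:
  assumes "0 < q" "transpose A *v f = transpose A *v (A *v y)" "y = transpose A *v v"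
  shows "\<exists>v'. useq A q f (Suc k) - y = transpose A *v v' \<and> norm v' \<le> norm v"
proof (induction k)
  case 0 show ?case using assms(3) by (intro exI[of _ "-v"]) (simp add: mv_neg del: transpose_matrix_vector)
next
  case (Suc k)
  then obtain v' where v': "useq A q f (Suc k) - y = transpose A *v v'" "norm v' \<le> norm v" by blast
  let ?a = "q^Suc k" let ?M' = "matrix_inv (Tmat (transpose A) ?a)"
  have a: "?a > 0" using assms(1) by simp
  have "useq A q f (Suc (Suc k)) - y = transpose A *v (?a *\<^sub>R (?M' *v v'))"
    unfolding U_err[OF assms(1,2)] v'(1) E3[OF a] by (simp add: matrix_vector_mult_scaleR del: transpose_matrix_vector)
  moreover have "?a * norm (?M' *v v') \<le> norm v'" by (rule E1[OF a T_inv1[OF a]])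
  ultimately show ?case using v'(2) a by (intro exI[of _ "?a *\<^sub>R (?M' *v v')"]) simp
qed

lemma U_rate:
  assumes "0 < q" "transpose A *v f = transpose A *v (A *v y)" "y = transpose A *v v"
  shows "(norm (useq A q f (Suc (Suc k)) - y))\<^sup>2 \<le> q^Suc k * (norm v)\<^sup>2 / 4"
proof -
  obtain v' where v': "useq A q f (Suc k) - y = transpose A *v v'" "norm v' \<le> norm v"
    using U_conv[OF assms] by blast
  let ?a = "q^Suc k" let ?M = "matrix_inv (Tmat A ?a)"
  have a: "?a > 0" using assms(1) by simp
  have "?a * (norm (?M *v (transpose A *v v')))\<^sup>2 \<le> (norm v')\<^sup>2 / 4"
    by (rule E2[OF a T_inv1[OF a]])
  also have "\<dots> \<le> (norm v)\<^sup>2 / 4" using v'(2) by (simp add: power_mono)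
  finally have *: "?a * (norm (?M *v (transpose A *v v')))\<^sup>2 \<le> (norm v)\<^sup>2 / 4" .
  have "(norm (useq A q f (Suc (Suc k)) - y))\<^sup>2 = ?a * (?a * (norm (?M *v (transpose A *v v')))\<^sup>2)"
    unfolding U_err[OF assms(1,2)] v'(1) using a by (simp add: power2_eq_square del: transpose_matrix_vector)
  also have "\<dots> \<le> ?a * ((norm v)\<^sup>2 / 4)" using a by (intro mult_left_mono[OF *]) simp
  finally show ?thesis by simp
qed


lemma range_subspace: "subspace (range ((*v) (M::real^'n^'m)))"
  by (rule linear_subspace_image[OF matrix_vector_mul_linear subspace_UNIV])

lemma decomp_range:
  fixes M :: "real^'n^'m"
  obtains w r where "h = M *v w + r" "\<And>x. r \<bullet> (M *v x) = 0"
proof -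
  obtain p r where p: "p \<in> span (range ((*v) M))" and r: "\<And>w. w \<in> span (range ((*v) M)) \<Longrightarrow> orthogonal r w"
    and h: "h = p + r"
    using orthogonal_subspace_decomp_exists[of "range ((*v) M)" h] by blast
  have sp: "span (range ((*v) M)) = range ((*v) M)" using range_subspace by simp
  from p sp obtain w where "p = M *v w" by auto
  moreover have "r \<bullet> (M *v x) = 0" for x using r[of "M *v x"] sp by (simp add: orthogonal_def)
  ultimately show ?thesis using that h by blast
qed

lemma orth_transpose_zero:
  fixes A :: "real^'m^'m"
  assumes "\<And>x. r \<bullet> (A *v x) = 0" shows "transpose A *v r = 0"
proof -
  have "(transpose A *v r) \<bullet> (transpose A *v r) = r \<bullet> (A *v (transpose A *v r))" by (rule inner_transpose)
  also have "\<dots> = 0" by (rule assms)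
  finally show ?thesis by simp
qed

lemma min_norm_range:
  fixes A :: "real^'m^'m"
  assumes "min_norm_solution A f y" shows "\<exists>v. y = transpose A *v v"
proof -
  obtain v z where yz: "y = transpose A *v v + z" and z: "\<And>x. z \<bullet> (transpose A *v x) = 0"
    using decomp_range[of y "transpose A"] by blast
  have "z \<bullet> (transpose A *v (A *v z)) = 0" by (rule z)
  hence "(A *v z) \<bullet> (A *v z) = 0" by (metis inner_commute inner_transpose)
  hence Az: "A *v z = 0" by simp
  have sol: "A *v y = f" using assms unfolding min_norm_solution_def by blast
  have "A *v (transpose A *v v) = A *v y - A *v z" unfolding yz by (simp add: matrix_vector_right_distrib del: transpose_matrix_vector)
  hence "A *v (transpose A *v v) = f" using sol Az by simp
  hence le: "norm y \<le> norm (transpose A *v v)" using assms unfolding min_norm_solution_def by blast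
  have "orthogonal (transpose A *v v) z" using z[of v] by (simp add: orthogonal_def inner_commute del: transpose_matrix_vector)
  hence "(norm y)\<^sup>2 = (norm (transpose A *v v))\<^sup>2 + (norm z)\<^sup>2" unfolding yz by (rule norm_add_Pythagorean)
  moreover have "(norm y)\<^sup>2 \<le> (norm (transpose A *v v))\<^sup>2" using le by (simp add: power_mono)
  ultimately have "(norm z)\<^sup>2 \<le> 0" by linarith
  hence "z = 0" by simp
  thus ?thesis using yz by (intro exI[of _ v]) simp
qed

definition Res :: "real^'m^'m \<Rightarrow> real \<Rightarrow> real^'m \<Rightarrow> real^'m" where
  "Res A a g = A *v (matrix_inv (Tmat A a) *v (transpose A *v g)) - g"

lemma Res_diff: "Res A a g - Res A a h = Res A a (g - h)"
  unfolding Res_def by (simp add: matrix_vector_mult_diff_distrib del: transpose_matrix_vector)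

lemma Res_bound: assumes "a > 0" shows "norm (Res A a d) \<le> norm d"
  unfolding Res_def by (rule E5[OF assms T_inv1[OF assms]])

lemma Res_nonzero: assumes "a > 0" "f \<noteq> 0" shows "Res A a f \<noteq> 0"
proof
  assume "Res A a f = 0"
  let ?z = "matrix_inv (Tmat A a) *v (transpose A *v f)"
  have Az: "A *v ?z = f" using \<open>Res A a f = 0\<close> unfolding Res_def by simp
  have "Tmat A a *v ?z = transpose A *v f" by (rule T_inv1[OF assms(1)])
  hence "transpose A *v f + a *\<^sub>R ?z = transpose A *v f" unfolding T_apply Az .
  hence "a *\<^sub>R ?z = 0" by simp
  hence "?z = 0" using assms(1) by simp
  hence "f = 0" using Az by simp
  with assms(2) show False by simp
qed

lemma Minv_AtA: assumes "a > 0"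
  shows "matrix_inv (Tmat A a) *v (transpose A *v (A *v w)) = w - a *\<^sub>R (matrix_inv (Tmat A a) *v (w::real^'m))"
proof -
  let ?M = "matrix_inv (Tmat A a)"
  have "?M *v (Tmat A a *v w) = w" by (rule T_inv2[OF assms])
  hence "?M *v (transpose A *v (A *v w) + a *\<^sub>R w) = w" by (simp only: T_apply)
  hence "?M *v (transpose A *v (A *v w)) + a *\<^sub>R (?M *v w) = w"
    by (simp only: matrix_vector_right_distrib matrix_vector_mult_scaleR)
  thus ?thesis by (simp add: algebra_simps del: transpose_matrix_vector)
qed

lemma stop_exists:
  fixes A :: "real^'m^'m"
  assumes "0 < q" "q < 1" "f = A *v x0" "norm (g - f) < B"
  shows "\<exists>n\<ge>1. norm (Res A (q^n) g) \<le> B"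
proof -
  obtain w r where h: "g = A *v w + r" and r: "\<And>x. r \<bullet> (A *v x) = 0" using decomp_range by blast
  have Atr: "transpose A *v r = 0" using orth_transpose_zero r by blast
  have "g - f = A *v (w - x0) + r" using h assms(3) by (simp add: matrix_vector_mult_diff_distrib)
  moreover have "orthogonal (A *v (w - x0)) r" using r by (simp add: orthogonal_def inner_commute)
  ultimately have "(norm (g-f))\<^sup>2 = (norm (A *v (w-x0)))\<^sup>2 + (norm r)\<^sup>2" by (simp add: norm_add_Pythagorean)
  hence "(norm r)\<^sup>2 \<le> (norm (g-f))\<^sup>2" by simp
  hence nr: "norm r \<le> norm (g - f)" by (rule power2_le_imp_le[OF _ norm_ge_zero])
  define D where "D = B - norm r"
  have D: "D > 0" using nr assms(4) unfolding D_def by simp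
  have "(\<lambda>n. q^n * ((norm w)\<^sup>2/4)) \<longlonglongrightarrow> 0"
    by (intro tendsto_mult_left_zero LIMSEQ_power_zero) (use assms in simp)
  moreover have "D\<^sup>2 > 0" using D by simp
  ultimately have "eventually (\<lambda>n. q^n * ((norm w)\<^sup>2/4) < D\<^sup>2) sequentially" by (rule order_tendstoD(2))
  then obtain N where N: "\<And>n. n \<ge> N \<Longrightarrow> q^n * ((norm w)\<^sup>2/4) < D\<^sup>2" by (auto simp: eventually_sequentially)
  define a where "a = q ^ Suc N"
  let ?M = "matrix_inv (Tmat A a)"
  have a: "a > 0" using assms(1) unfolding a_def by simp
  have "transpose A *v g = transpose A *v (A *v w)" using Atr h by (simp add: matrix_vector_right_distrib del: transpose_matrix_vector)
  hence "Res A a g = A *v (w - a *\<^sub>R (?M *v w)) - g" unfolding Res_def by (simp only: Minv_AtA[OF a])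
  also have "\<dots> = - (a *\<^sub>R (A *v (?M *v w))) - r" unfolding h
    by (simp add: matrix_vector_mult_diff_distrib matrix_vector_mult_scaleR)
  finally have Rg: "Res A a g = - (a *\<^sub>R (A *v (?M *v w))) - r" .
  have "a * (norm (A *v (?M *v w)))\<^sup>2 \<le> (norm w)\<^sup>2 / 4" by (rule E6[OF a T_inv1[OF a]])
  hence "a * (a * (norm (A *v (?M *v w)))\<^sup>2) \<le> a * ((norm w)\<^sup>2 / 4)" using a by (intro mult_left_mono) simp_all
  also have "\<dots> < D\<^sup>2" using N[of "Suc N"] unfolding a_def by simp
  finally have "(norm (a *\<^sub>R (A *v (?M *v w))))\<^sup>2 < D\<^sup>2" using a by (simp add: power2_eq_square mult_ac)
  hence "norm (a *\<^sub>R (A *v (?M *v w))) < D" using D by (simp add: power_less_imp_less_base)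
  hence "norm (Res A a g) < B" unfolding Rg D_def
    by (smt (verit) norm_minus_cancel norm_triangle_ineq4)
  thus ?thesis unfolding a_def by (intro exI[of _ "Suc N"]) simp
qed

lemma useq_sum: "useq A q (sum g S) n = (\<Sum>x\<in>S. useq A q (g x) n)"
  by (simp add: linear_sum[OF useq_linear])

lemma uniform_bound:
  fixes A :: "real^'m^'m" assumes "0 < q"
  shows "\<exists>K\<ge>0. \<forall>n h. norm (useq A q h n) \<le> K * norm h"
proof -
  have "\<exists>w. transpose A *v (axis i 1) = transpose A *v (A *v w)" for i
  proof -
    obtain w r where h: "axis i 1 = A *v w + r" and r: "\<And>x. r \<bullet> (A *v x) = 0" using decomp_range by blast
    have "transpose A *v r = 0" using orth_transpose_zero r by blast
    hence "transpose A *v (axis i 1) = transpose A *v (A *v w)" unfolding h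
      by (simp add: matrix_vector_right_distrib del: transpose_matrix_vector)
    thus ?thesis by blast
  qed
  then obtain W where W: "\<And>i. transpose A *v (axis i 1) = transpose A *v (A *v W i)" by metis
  define K where "K = (\<Sum>i\<in>UNIV. 2 * norm (W i))"
  have K0: "K \<ge> 0" unfolding K_def by (simp add: sum_nonneg)
  have b: "norm (useq A q (axis i 1) n) \<le> 2 * norm (W i)" for i n
  proof -
    have "norm (useq A q (axis i 1) n - W i) \<le> norm (W i)" by (rule U_bound[OF assms W])
    thus ?thesis using norm_triangle_sub[of "useq A q (axis i 1) n" "W i"] by linarith
  qed
  have "norm (useq A q h n) \<le> K * norm h" for n h
  proof -
    have hs: "h = (\<Sum>i\<in>UNIV. h$i *\<^sub>R axis i 1)" using basis_expansion[of h] by (simp add: scalar_mult_eq_scaleR)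
    have "useq A q h n = (\<Sum>i\<in>UNIV. h$i *\<^sub>R useq A q (axis i 1) n)"
      by (subst hs) (simp add: useq_sum useq_scale)
    hence "norm (useq A q h n) \<le> (\<Sum>i\<in>UNIV. norm (h$i *\<^sub>R useq A q (axis i 1) n))"
      by (simp only: norm_sum)
    also have "\<dots> \<le> (\<Sum>i\<in>UNIV. norm h * (2 * norm (W i)))"
    proof (rule sum_mono)
      fix i :: 'm
      have "\<bar>h$i\<bar> * norm (useq A q (axis i 1) n) \<le> norm h * (2 * norm (W i))"
        by (rule mult_mono[OF component_le_norm_cart b]) simp_all
      thus "norm (h$i *\<^sub>R useq A q (axis i 1) n) \<le> norm h * (2 * norm (W i))" by simp
    qed
    also have "\<dots> = K * norm h" unfolding K_def by (simp add: sum_distrib_left mult.commute)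
    finally show ?thesis .
  qed
  thus ?thesis using K0 by blast
qed

lemma stop_index_Res: "stop_index A q C eps \<delta> g = (LEAST n. n \<ge> 1 \<and> norm (Res A (q ^ n) g) \<le> C * \<delta> powr eps)"
  unfolding stop_index_def Res_def by (rule refl)

theorem theorem3p6:
  fixes A :: "real^'m^'m" and f y :: "real^'m" and q C eps :: real
    and fd :: "real \<Rightarrow> real^'m"
  assumes "f \<in> range (\<lambda>x. A *v x)"
    and "min_norm_solution A f y"
    and "0 < q" "q < 1" "1 < C" "0 < eps" "eps < 1"
    and "\<And>\<delta>. 0 < \<delta> \<Longrightarrow> \<delta> < 1 \<Longrightarrow> norm (fd \<delta> - f) \<le> \<delta>"
    and "\<And>\<delta>. 0 < \<delta> \<Longrightarrow> \<delta> < 1 \<Longrightarrow> norm (fd \<delta>) > C * \<delta> powr eps"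
  shows "((\<lambda>\<delta>. norm (useq A q (fd \<delta>) (stop_index A q C eps \<delta> (fd \<delta>)) - y)) \<longlongrightarrow> 0)
           (at_right 0)"
proof -
  from assms(1) obtain x0 where f: "f = A *v x0" by auto
  have sol: "A *v y = f" using assms(2) unfolding min_norm_solution_def by blast
  obtain v where yv: "y = transpose A *v v" using min_norm_range[OF assms(2)] by blast
  have Atf: "transpose A *v f = transpose A *v (A *v y)" using sol by simp
  obtain K where K0: "K \<ge> 0" and K: "\<And>n h. norm (useq A q h n) \<le> K * norm h"
    using uniform_bound[OF assms(3)] by blast
  have dlt: "\<delta> < C * \<delta> powr eps" if "0 < \<delta>" "\<delta> < 1" for \<delta>
  proof -
    have "\<delta> = \<delta> powr 1" using that by simp
    also have "\<dots> \<le> \<delta> powr eps" using that assms(7) by (intro powr_mono') simp_all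
    also have "\<dots> < C * \<delta> powr eps" using that assms(5) by simp
    finally show ?thesis .
  qed
  have fne: "f \<noteq> 0"
  proof
    assume f0: "f = 0"
    have "norm (fd (1/2)) \<le> 1/2" using assms(8)[of "1/2"] f0 by simp
    moreover have "norm (fd (1/2)) > C * (1/2) powr eps" using assms(9)[of "1/2"] by simp
    moreover have "(1/2::real) < C * (1/2) powr eps" using dlt[of "1/2"] by simp
    ultimately show False by linarith
  qed
  have stop_prop: "stop_index A q C eps \<delta> (fd \<delta>) \<ge> 1 \<and>
      norm (Res A (q ^ stop_index A q C eps \<delta> (fd \<delta>)) (fd \<delta>)) \<le> C * \<delta> powr eps"
    if "0 < \<delta>" "\<delta> < 1" for \<delta>
  proof -
    have "norm (fd \<delta> - f) < C * \<delta> powr eps" using assms(8)[OF that] dlt[OF that] by linarith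
    hence "\<exists>n. n \<ge> 1 \<and> norm (Res A (q^n) (fd \<delta>)) \<le> C * \<delta> powr eps"
      using stop_exists[OF assms(3,4) f] by blast
    thus ?thesis unfolding stop_index_Res by (rule LeastI_ex)
  qed
  show ?thesis
    unfolding tendsto_iff
  proof (intro allI impI)
    fix e :: real assume e: "e > 0"
    have "(\<lambda>k. q^k * ((norm v)\<^sup>2/4)) \<longlonglongrightarrow> 0"
      by (intro tendsto_mult_left_zero LIMSEQ_power_zero) (use assms in simp)
    moreover have "(e/2)\<^sup>2 > 0" using e by simp
    ultimately have "eventually (\<lambda>k. q^k * ((norm v)\<^sup>2/4) < (e/2)\<^sup>2) sequentially" by (rule order_tendstoD(2))
    then obtain k0 where k0: "q^k0 * ((norm v)\<^sup>2/4) < (e/2)\<^sup>2" by (auto simp: eventually_sequentially)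
    define N where "N = k0 + 2"
    have ex: "norm (useq A q f n - y) < e/2" if "n \<ge> N" for n
    proof -
      define k where "k = n - 2"
      have k: "n = Suc (Suc k)" "k0 \<le> k" using that unfolding N_def k_def by auto
      have "(norm (useq A q f n - y))\<^sup>2 \<le> q^Suc k * (norm v)\<^sup>2 / 4" unfolding k(1) by (rule U_rate[OF assms(3) Atf yv])
      also have "\<dots> = q^Suc k * ((norm v)\<^sup>2 / 4)" by simp
      also have "\<dots> \<le> q^k0 * ((norm v)\<^sup>2 / 4)"
        using k(2) assms(3,4) by (intro mult_right_mono power_decreasing) simp_all
      also have "\<dots> < (e/2)\<^sup>2" by (rule k0)
      finally have "(norm (useq A q f n - y))\<^sup>2 < (e/2)\<^sup>2" .
      thus ?thesis by (rule power_less_imp_less_base) (use e in simp)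
    qed
    have lim: "((\<lambda>\<delta>. \<delta> + C * \<delta> powr eps) \<longlongrightarrow> 0) (at_right (0::real))"
    proof -
      have "((\<lambda>\<delta>::real. \<delta> powr eps) \<longlongrightarrow> 0) (at_right 0)"
      proof (rule tendsto_zero_powrI[OF tendsto_ident_at tendsto_const _ assms(6)])
        show "\<forall>\<^sub>F x in at_right 0. 0 \<le> (x::real)"
          using eventually_at_right_less by (rule eventually_mono) simp
      qed
      hence "((\<lambda>\<delta>::real. C * \<delta> powr eps) \<longlongrightarrow> 0) (at_right 0)" by (rule tendsto_mult_right_zero)
      hence "((\<lambda>\<delta>::real. \<delta> + C * \<delta> powr eps) \<longlongrightarrow> 0 + 0) (at_right 0)"
        by (intro tendsto_add) simp_all
      thus ?thesis by simp
    qed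
    have ev1: "eventually (\<lambda>\<delta>. \<forall>n\<in>{1..<N}. \<delta> + C * \<delta> powr eps < norm (Res A (q^n) f)) (at_right 0)"
    proof (rule eventually_ball_finite)
      show "finite {1..<N}" by simp
      show "\<forall>n\<in>{1..<N}. eventually (\<lambda>\<delta>. \<delta> + C * \<delta> powr eps < norm (Res A (q^n) f)) (at_right 0)"
      proof
        fix n assume "n \<in> {1..<N}"
        have "norm (Res A (q^n) f) > 0" using Res_nonzero[of "q^n" f A] assms(3) fne by simp
        thus "eventually (\<lambda>\<delta>. \<delta> + C * \<delta> powr eps < norm (Res A (q^n) f)) (at_right 0)"
          by (rule order_tendstoD(2)[OF lim])
      qed
    qed
    have ev2: "eventually (\<lambda>\<delta>::real. 0 < \<delta> \<and> \<delta> < 1) (at_right 0)"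
      unfolding eventually_at_right_field by (intro exI[of _ 1]) auto
    have "((\<lambda>\<delta>::real. K * \<delta>) \<longlongrightarrow> 0) (at_right 0)"
      by (rule tendsto_mult_right_zero) simp
    hence ev3: "eventually (\<lambda>\<delta>. K * \<delta> < e/2) (at_right 0)"
      by (rule order_tendstoD(2)) (use e in linarith)
    show "eventually (\<lambda>\<delta>. dist (norm (useq A q (fd \<delta>) (stop_index A q C eps \<delta> (fd \<delta>)) - y)) 0 < e) (at_right 0)"
      using ev1 ev2 ev3
    proof eventually_elim
      case (elim \<delta>)
      hence d: "0 < \<delta>" "\<delta> < 1" and Kd: "K * \<delta> < e/2"
        and bad: "\<And>n. n \<in> {1..<N} \<Longrightarrow> \<delta> + C * \<delta> powr eps < norm (Res A (q^n) f)" by auto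
      define g where "g = fd \<delta>"
      define n0 where "n0 = stop_index A q C eps \<delta> g"
      have n01: "n0 \<ge> 1" and n0R: "norm (Res A (q^n0) g) \<le> C * \<delta> powr eps"
        using stop_prop[OF d] unfolding n0_def g_def by auto
      have gf: "norm (g - f) \<le> \<delta>" unfolding g_def by (rule assms(8)[OF d])
      have "n0 \<ge> N"
      proof (rule ccontr)
        assume "\<not> N \<le> n0"
        hence "n0 \<in> {1..<N}" using n01 by simp
        hence b: "\<delta> + C * \<delta> powr eps < norm (Res A (q^n0) f)" by (rule bad)
        have "Res A (q^n0) f = Res A (q^n0) g - (Res A (q^n0) g - Res A (q^n0) f)" by simp
        also have "\<dots> = Res A (q^n0) g - Res A (q^n0) (g - f)" by (simp only: Res_diff)
        finally have "Res A (q^n0) f = Res A (q^n0) g - Res A (q^n0) (g - f)" .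
        hence "norm (Res A (q^n0) f) \<le> norm (Res A (q^n0) g) + norm (Res A (q^n0) (g - f))"
          by (simp add: norm_triangle_ineq4)
        moreover have "norm (Res A (q^n0) (g - f)) \<le> norm (g - f)" using assms(3) by (intro Res_bound) simp
        ultimately show False using b n0R gf by linarith
      qed
      have "norm (useq A q g n0 - y) \<le> norm (useq A q g n0 - useq A q f n0) + norm (useq A q f n0 - y)"
        by (rule norm_diff_triangle_le[OF order_refl order_refl])
      also have "norm (useq A q g n0 - useq A q f n0) = norm (useq A q (g - f) n0)" by (simp add: useq_diff)
      also have "\<dots> \<le> K * norm (g - f)" by (rule K)
      also have "\<dots> \<le> K * \<delta>" using K0 gf by (rule mult_left_mono[rotated])
      finally have "norm (useq A q g n0 - y) < e" using Kd ex[OF \<open>n0 \<ge> N\<close>] by linarith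
      thus ?case unfolding g_def n0_def by simp
    qed
  qed
qed

end
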